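(* The intersection $\bigcap_{e\ge 1}\hat G^{(e)}$ equals $PGL_2(F)$ (viewed inside $\mathrm{Aut}(X_{PGL_2(F)})$), and $PGL_2(F)\subseteq \hat G^{(e+1)}\subseteq\hat G^{(e)}\subseteq \mathrm{Aut}(X_{PGL_2(F)})$ for all $e\ge1$.
   Context: Let $F$ be a non-archimedean local field with ring of integers $\mathfrak{o}$, uniformizer $\varpi$, and finite residue field of cardinality $q$. $X=X_{PGL_2(F)}$ is the Bruhat–Tits tree of $PGL_2(F)$: its vertices are homothety classes $[L]$ (under $F^\times$) of $\mathfrak{o}$-lattices $L\subset F^2$, and $[L],[L']$ are joined by an edge iff there are representatives with $\varpi L\subsetneq L'\subsetneq L$; it is a $(q+1)$-regular tree. $d$ is the path-length distance on vertices; $\mathrm{Aut}(X)$ is the group of distance-preserving bijections of the vertex set, with the topology of pointwise convergence. $GL_2(F)$ acts on lattices through its linear action on $F^2$, the centre acts trivially, and this gives an embedding $PGL_2(F)\hookrightarrow\mathrm{Aut}(X)$. For an edge $\eta=\{x_1,x_2\}$ and $e\ge1$, $B(\eta,e)=\{y: \min(d(y,x_1),d(y,x_2))\le e\}$. Define $\hat G^{(e)}=\{g\in\mathrm{Aut}(X):\ \text{for every edge }\eta\ \text{there is } g'\in PGL_2(F)\text{ with } g|_{B(\eta,e)}=g'|_{B(\eta,e)}\}$. *)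

theory Defs
  imports Main
begin

text \<open>A non-archimedean local field F: a field (type 'a) with a normalised discrete
  valuation v (the value v 0 is irrelevant) which is complete and has finite residue field.\<close>

definition val_ring :: "('a::field \<Rightarrow> int) \<Rightarrow> 'a set" where
  "val_ring v = {x. x = 0 \<or> 0 \<le> v x}"

definition max_ideal :: "('a::field \<Rightarrow> int) \<Rightarrow> 'a set" where
  "max_ideal v = {x. x = 0 \<or> 1 \<le> v x}"

definition nonarch_local_field :: "('a::field \<Rightarrow> int) \<Rightarrow> bool" where
  "nonarch_local_field v \<longleftrightarrow>
     (\<forall>x y. x \<noteq> 0 \<longrightarrow> y \<noteq> 0 \<longrightarrow> v (x * y) = v x + v y) \<and>
     (\<forall>x y. x \<noteq> 0 \<longrightarrow> y \<noteq> 0 \<longrightarrow> x + y \<noteq> 0 \<longrightarrow> min (v x) (v y) \<le> v (x + y)) \<and>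
     (\<exists>p. p \<noteq> 0 \<and> v p = 1) \<and>
     (\<exists>R. finite R \<and> R \<subseteq> val_ring v \<and> (\<forall>x\<in>val_ring v. \<exists>r\<in>R. x - r \<in> max_ideal v)) \<and>
     (\<forall>s::nat \<Rightarrow> 'a.
        (\<forall>N::int. \<exists>M. \<forall>m\<ge>M. \<forall>n\<ge>M. s m - s n \<in> {x. x = 0 \<or> N \<le> v x})
        \<longrightarrow> (\<exists>l. \<forall>N::int. \<exists>M. \<forall>n\<ge>M. s n - l \<in> {x. x = 0 \<or> N \<le> v x}))"

text \<open>Vectors in F^2 and 2x2 matrices (a,b,c,d) = [[a,b],[c,d]].\<close>

type_synonym 'a vec2 = "'a \<times> 'a"
type_synonym 'a mat2 = "'a \<times> 'a \<times> 'a \<times> 'a"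

fun mat_apply :: "'a::field mat2 \<Rightarrow> 'a vec2 \<Rightarrow> 'a vec2" where
  "mat_apply (a, b, c, d) (x, y) = (a * x + b * y, c * x + d * y)"

fun mat_det :: "'a::field mat2 \<Rightarrow> 'a" where
  "mat_det (a, b, c, d) = a * d - b * c"

definition scal2 :: "'a::field \<Rightarrow> 'a vec2 \<Rightarrow> 'a vec2" where
  "scal2 c u = (c * fst u, c * snd u)"

definition is_lattice :: "('a::field \<Rightarrow> int) \<Rightarrow> 'a vec2 set \<Rightarrow> bool" where
  "is_lattice v L \<longleftrightarrow> (\<exists>u w. fst u * snd w - snd u * fst w \<noteq> 0 \<and>
      L = {(a * fst u + b * fst w, a * snd u + b * snd w) | a b. a \<in> val_ring v \<and> b \<in> val_ring v})"

definition hclass :: "'a::field vec2 set \<Rightarrow> 'a vec2 set set" where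
  "hclass L = {scal2 c ` L | c. c \<noteq> 0}"

definition vertices :: "('a::field \<Rightarrow> int) \<Rightarrow> 'a vec2 set set set" where
  "vertices v = {hclass L | L. is_lattice v L}"

definition adj :: "('a::field \<Rightarrow> int) \<Rightarrow> 'a vec2 set set \<Rightarrow> 'a vec2 set set \<Rightarrow> bool" where
  "adj v x y \<longleftrightarrow> x \<in> vertices v \<and> y \<in> vertices v \<and>
     (\<exists>L\<in>x. \<exists>L'\<in>y. \<exists>p. p \<noteq> 0 \<and> v p = 1 \<and> scal2 p ` L \<subset> L' \<and> L' \<subset> L)"

definition tdist :: "('a::field \<Rightarrow> int) \<Rightarrow> 'a vec2 set set \<Rightarrow> 'a vec2 set set \<Rightarrow> nat" where
  "tdist v x y = (LEAST n. \<exists>p::nat \<Rightarrow> 'a vec2 set set.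
       p 0 = x \<and> p n = y \<and> (\<forall>i<n. adj v (p i) (p (Suc i))))"

text \<open>Aut(X): distance-preserving bijections of the vertex set (normalised to be the
  identity off the vertex set, so that they are determined by their action on vertices).\<close>

definition tree_aut :: "('a::field \<Rightarrow> int) \<Rightarrow> ('a vec2 set set \<Rightarrow> 'a vec2 set set) set" where
  "tree_aut v = {g. bij_betw g (vertices v) (vertices v) \<and>
      (\<forall>x\<in>vertices v. \<forall>y\<in>vertices v. tdist v (g x) (g y) = tdist v x y) \<and>
      (\<forall>x. x \<notin> vertices v \<longrightarrow> g x = x)}"

definition gl_act :: "'a::field mat2 \<Rightarrow> 'a vec2 set set \<Rightarrow> 'a vec2 set set" where
  "gl_act M x = (\<lambda>L. mat_apply M ` L) ` x"

definition pgl_aut :: "('a::field \<Rightarrow> int) \<Rightarrow> 'a mat2 \<Rightarrow> ('a vec2 set set \<Rightarrow> 'a vec2 set set)" where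
  "pgl_aut v M = (\<lambda>x. if x \<in> vertices v then gl_act M x else x)"

definition PGL_in_Aut :: "('a::field \<Rightarrow> int) \<Rightarrow> ('a vec2 set set \<Rightarrow> 'a vec2 set set) set" where
  "PGL_in_Aut v = {pgl_aut v M | M. mat_det M \<noteq> 0}"

definition Ghat :: "('a::field \<Rightarrow> int) \<Rightarrow> nat \<Rightarrow> ('a vec2 set set \<Rightarrow> 'a vec2 set set) set" where
  "Ghat v e = {g \<in> tree_aut v. \<forall>x1 x2. adj v x1 x2 \<longrightarrow>
      (\<exists>g'\<in>PGL_in_Aut v. \<forall>y\<in>vertices v.
          min (tdist v y x1) (tdist v y x2) \<le> e \<longrightarrow> g y = g' y)}"

end

theory Submission
  imports Defs
begin
locale nlf =
  fixes v :: "'a::field \<Rightarrow> int" and p :: 'a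
  assumes vmult: "\<And>x y. x \<noteq> 0 \<Longrightarrow> y \<noteq> 0 \<Longrightarrow> v (x * y) = v x + v y"
  and vultra: "\<And>x y. x \<noteq> 0 \<Longrightarrow> y \<noteq> 0 \<Longrightarrow> x + y \<noteq> 0 \<Longrightarrow> min (v x) (v y) \<le> v (x + y)"
  and p0: "p \<noteq> 0" and vp: "v p = 1"
  and complete: "\<And>s::nat \<Rightarrow> 'a.
        (\<forall>N::int. \<exists>M. \<forall>m\<ge>M. \<forall>n\<ge>M. s m - s n \<in> {x. x = 0 \<or> N \<le> v x})
        \<Longrightarrow> (\<exists>l. \<forall>N::int. \<exists>M. \<forall>n\<ge>M. s n - l \<in> {x. x = 0 \<or> N \<le> v x})"
begin

definition ge :: "int \<Rightarrow> 'a \<Rightarrow> bool" where "ge k x \<longleftrightarrow> x = 0 \<or> k \<le> v x"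

lemma v1: "v 1 = 0" using vmult[of 1 1] by simp

lemma vinv: "x \<noteq> 0 \<Longrightarrow> v (inverse x) = - v x"
  using vmult[of x "inverse x"] v1 by simp

lemma vdiv: "x \<noteq> 0 \<Longrightarrow> y \<noteq> 0 \<Longrightarrow> v (x / y) = v x - v y"
  by (simp add: divide_inverse vmult vinv)

lemma vm1: "v (-1) = 0"
  using vmult[of "-1" "-1"] v1 by simp

lemma vneg: "v (- x) = v x"
proof (cases "x = 0")
  case False then show ?thesis using vmult[of "-1" x] vm1 by simp
qed simp

lemma vpow: "v (p ^ n) = int n"
  by (induction n) (auto simp: v1 vmult p0 vp)

lemma ge0[simp]: "ge k 0" by (simp add: ge_def)
lemma ge_neg[simp]: "ge k (- x) = ge k x" by (auto simp: ge_def vneg)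
lemma ge_add: "ge k x \<Longrightarrow> ge k y \<Longrightarrow> ge k (x + y)"
  unfolding ge_def using vultra[of x y] by (cases "x = 0"; cases "y = 0"; cases "x + y = 0"; auto)
lemma ge_diff: "ge k x \<Longrightarrow> ge k y \<Longrightarrow> ge k (x - y)"
  using ge_add[of k x "- y"] by simp
lemma ge_mult: "ge k x \<Longrightarrow> ge l y \<Longrightarrow> ge (k + l) (x * y)"
  unfolding ge_def by (cases "x = 0"; cases "y = 0") (auto simp: vmult)
lemma ge_mono: "ge k x \<Longrightarrow> l \<le> k \<Longrightarrow> ge l x"
  unfolding ge_def by auto
lemma ge_1[simp]: "ge 0 1" by (simp add: ge_def v1)
lemma ge_m1[simp]: "ge 0 (-1)" by (simp add: ge_def vm1)
lemma ge_pow: "ge (int n) (p ^ n)" by (simp add: ge_def vpow)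
lemma ge_p: "ge 1 p" by (simp add: ge_def vp)
lemma ge_mult0: "ge 0 x \<Longrightarrow> ge 0 y \<Longrightarrow> ge 0 (x * y)"
  using ge_mult[of 0 x 0 y] by simp
lemma ge_multk: "ge k x \<Longrightarrow> ge 0 y \<Longrightarrow> ge k (x * y)"
  using ge_mult[of k x 0 y] by simp
lemma ge_multk': "ge 0 x \<Longrightarrow> ge k y \<Longrightarrow> ge k (x * y)"
  using ge_mult[of 0 x k y] by simp
lemma ge_div_pow: "ge k x \<Longrightarrow> ge (k - int n) (x / p ^ n)"
  unfolding ge_def by (cases "x = 0") (auto simp: vdiv vpow p0)
lemma ge_mult_pow: "ge k x \<Longrightarrow> ge (k + int n) (x * p ^ n)"
  using ge_mult[OF _ ge_pow] by auto
lemma ge_unit_inv: "x \<noteq> 0 \<Longrightarrow> v x = 0 \<Longrightarrow> ge 0 (inverse x)"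
  by (simp add: ge_def vinv)
lemma ge_inv: "x \<noteq> 0 \<Longrightarrow> ge k (inverse x) \<longleftrightarrow> k \<le> - v x"
  by (simp add: ge_def vinv)

lemma unit_close: assumes "b \<noteq> 0" "v b = 0" "ge 1 (a - b)" shows "a \<noteq> 0 \<and> v a = 0"
proof -
  have "a \<noteq> 0" using assms unfolding ge_def by (auto simp: vneg)
  moreover have "v a = 0"
  proof (cases "a - b = 0")
    case True then show ?thesis using assms by simp
  next
    case False
    have 1: "1 \<le> v (a - b)" using assms False ge_def by auto
    have "min (v (a - b)) (v b) \<le> v a" using vultra[of "a - b" b] False assms \<open>a\<noteq>0\<close> by simp
    moreover have "min (v a) (v (b - a)) \<le> v b" using vultra[of a "b - a"] False assms \<open>a\<noteq>0\<close> by simp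
    moreover have "v (b - a) = v (a - b)" using vneg[of "a - b"] by simp
    ultimately show ?thesis using 1 assms by linarith
  qed
  ultimately show ?thesis by simp
qed

lemma ge0_pos: "ge 0 x \<Longrightarrow> x \<noteq> 0 \<Longrightarrow> 0 \<le> v x" by (simp add: ge_def)

lemma unit_prod: assumes "ge 0 x" "ge 0 y" "x * y \<noteq> 0" "v (x * y) = 0"
  shows "v x = 0" "v y = 0"
  using assms vmult[of x y] unfolding ge_def by auto

end

definition lin :: "'a::field \<Rightarrow> 'a vec2 \<Rightarrow> 'a \<Rightarrow> 'a vec2 \<Rightarrow> 'a vec2" where
  "lin a u b w = (a * fst u + b * fst w, a * snd u + b * snd w)"

definition dt :: "'a::field vec2 \<Rightarrow> 'a vec2 \<Rightarrow> 'a" where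
  "dt u w = fst u * snd w - snd u * fst w"

context nlf begin

definition lat :: "'a vec2 \<Rightarrow> 'a vec2 \<Rightarrow> 'a vec2 set" where
  "lat u w = {lin a u b w | a b. ge 0 a \<and> ge 0 b}"

lemma val_ring_ge: "val_ring v = {x. ge 0 x}"
  by (auto simp: val_ring_def ge_def)

lemma is_lattice_lat: "is_lattice v L \<longleftrightarrow> (\<exists>u w. dt u w \<noteq> 0 \<and> L = lat u w)"
  unfolding is_lattice_def lat_def dt_def lin_def val_ring_ge by auto

lemma lat_lin: "ge 0 a \<Longrightarrow> ge 0 b \<Longrightarrow> lin a u b w \<in> lat u w"
  unfolding lat_def by blast

lemma lat_u: "u \<in> lat u w" using lat_lin[of 1 0 u w] by (simp add: lin_def)
lemma lat_w: "w \<in> lat u w" using lat_lin[of 0 1 u w] by (simp add: lin_def)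

lemma lat_closed: assumes "x \<in> lat u w" "y \<in> lat u w" "ge 0 a" "ge 0 b"
  shows "lin a x b y \<in> lat u w"
proof -
  obtain a1 b1 where x: "x = lin a1 u b1 w" "ge 0 a1" "ge 0 b1" using assms(1) lat_def by auto
  obtain a2 b2 where y: "y = lin a2 u b2 w" "ge 0 a2" "ge 0 b2" using assms(2) lat_def by auto
  have "lin a x b y = lin (a*a1 + b*a2) u (a*b1+b*b2) w"
    by (simp add: x y lin_def algebra_simps)
  moreover have "ge 0 (a*a1 + b*a2)" "ge 0 (a*b1+b*b2)"
    using x y assms by (auto intro!: ge_add ge_mult0)
  ultimately show ?thesis using lat_lin by simp
qed

lemma lat_add: "x \<in> lat u w \<Longrightarrow> y \<in> lat u w \<Longrightarrow> (fst x + fst y, snd x + snd y) \<in> lat u w"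
  using lat_closed[of x u w y 1 1] by (simp add: lin_def)

lemma lat_smul: "x \<in> lat u w \<Longrightarrow> ge 0 a \<Longrightarrow> scal2 a x \<in> lat u w"
  using lat_closed[of x u w x a 0] by (simp add: lin_def scal2_def)

lemma lat_sub: "u' \<in> lat u w \<Longrightarrow> w' \<in> lat u w \<Longrightarrow> lat u' w' \<subseteq> lat u w"
  using lat_closed unfolding lat_def[of u' w'] by blast

lemma lat_eq: "u' \<in> lat u w \<Longrightarrow> w' \<in> lat u w \<Longrightarrow> u \<in> lat u' w' \<Longrightarrow> w \<in> lat u' w' \<Longrightarrow> lat u' w' = lat u w"
  using lat_sub by blast

lemma lat_sym: "lat u w = lat w u"
  by (rule lat_eq) (auto simp: lat_u lat_w)

lemma mat_lin: "mat_apply M (lin a u b w) = lin a (mat_apply M u) b (mat_apply M w)"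
  by (cases M; cases u; cases w) (simp add: lin_def algebra_simps)

lemma mat_lat: "mat_apply M ` lat u w = lat (mat_apply M u) (mat_apply M w)"
proof (rule set_eqI, rule iffI)
  fix x assume "x \<in> mat_apply M ` lat u w"
  then obtain a b where "x = mat_apply M (lin a u b w)" "ge 0 a" "ge 0 b" unfolding lat_def by auto
  then show "x \<in> lat (mat_apply M u) (mat_apply M w)" by (simp add: mat_lin lat_lin)
next
  fix x assume "x \<in> lat (mat_apply M u) (mat_apply M w)"
  then obtain a b where "x = mat_apply M (lin a u b w)" "ge 0 a" "ge 0 b" unfolding lat_def by (auto simp: mat_lin)
  then show "x \<in> mat_apply M ` lat u w" using lat_lin by blast
qed

lemma scal_lin: "scal2 c (lin a u b w) = lin a (scal2 c u) b (scal2 c w)"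
  by (simp add: lin_def scal2_def algebra_simps)

lemma scal_lat: "scal2 c ` lat u w = lat (scal2 c u) (scal2 c w)"
proof (rule set_eqI, rule iffI)
  fix x assume "x \<in> scal2 c ` lat u w"
  then obtain a b where "x = scal2 c (lin a u b w)" "ge 0 a" "ge 0 b" unfolding lat_def by auto
  then show "x \<in> lat (scal2 c u) (scal2 c w)" by (simp add: scal_lin lat_lin)
next
  fix x assume "x \<in> lat (scal2 c u) (scal2 c w)"
  then obtain a b where "x = scal2 c (lin a u b w)" "ge 0 a" "ge 0 b" unfolding lat_def by (auto simp: scal_lin)
  then show "x \<in> scal2 c ` lat u w" using lat_lin by blast
qed

lemma lin_coords: assumes "dt u w \<noteq> 0"
  shows "x = lin ((fst x * snd w - snd x * fst w) / dt u w) u ((fst u * snd x - snd u * fst x) / dt u w) w"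
proof -
  obtain x1 x2 u1 u2 w1 w2 where e: "x = (x1,x2)" "u = (u1,u2)" "w = (w1,w2)" by (cases x; cases u; cases w)
  have d: "u1*w2 - u2*w1 \<noteq> 0" using assms e by (simp add: dt_def)
  have "(x1 * w2 - x2 * w1) / (u1*w2 - u2*w1) * u1 + (u1 * x2 - u2 * x1) / (u1*w2 - u2*w1) * w1 = x1"
    using d by (simp add: divide_simps) algebra
  moreover have "(x1 * w2 - x2 * w1) / (u1*w2 - u2*w1) * u2 + (u1 * x2 - u2 * x1) / (u1*w2 - u2*w1) * w2 = x2"
    using d by (simp add: divide_simps) algebra
  ultimately show ?thesis by (simp add: e lin_def dt_def)
qed

lemma lin_indep: assumes "dt u w \<noteq> 0" "lin a u b w = lin a' u b' w" shows "a = a'" "b = b'"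
proof -
  obtain u1 u2 w1 w2 where e: "u = (u1,u2)" "w = (w1,w2)" by (cases u; cases w)
  have d: "u1*w2 - u2*w1 \<noteq> 0" using assms e by (simp add: dt_def)
  have h: "a*u1 + b*w1 = a'*u1 + b'*w1" "a*u2 + b*w2 = a'*u2 + b'*w2" using assms(2) e by (auto simp: lin_def)
  have "(a - a') * (u1*w2 - u2*w1) = 0" using h by algebra
  then show "a = a'" using d by simp
  have "(b - b') * (u1*w2 - u2*w1) = 0" using h by algebra
  then show "b = b'" using d by simp
qed

lemma lat_mem_iff: assumes "dt u w \<noteq> 0"
  shows "x \<in> lat u w \<longleftrightarrow> ge 0 ((fst x * snd w - snd x * fst w) / dt u w) \<and> ge 0 ((fst u * snd x - snd u * fst x) / dt u w)"
proof
  assume "x \<in> lat u w"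
  then obtain a b where ab: "x = lin a u b w" "ge 0 a" "ge 0 b" unfolding lat_def by auto
  then show "ge 0 ((fst x * snd w - snd x * fst w) / dt u w) \<and> ge 0 ((fst u * snd x - snd u * fst x) / dt u w)"
    using lin_indep[OF assms] lin_coords[OF assms, of x] by metis
next
  assume "ge 0 ((fst x * snd w - snd x * fst w) / dt u w) \<and> ge 0 ((fst u * snd x - snd u * fst x) / dt u w)"
  then show "x \<in> lat u w" using lin_coords[OF assms, of x] lat_lin by metis
qed

end

lemma scal2_scal2: "scal2 c ` (scal2 d ` L) = scal2 (c * d) ` L"
  by (auto simp: scal2_def image_image mult.assoc)

lemma scal2_1: "scal2 1 ` L = L" by (auto simp: scal2_def)

lemma scal2_inj: "c \<noteq> 0 \<Longrightarrow> inj (scal2 c)"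
  by (auto simp: inj_def scal2_def)

lemma hclass_self: "L \<in> hclass L"
  unfolding hclass_def using scal2_1[of L] by (metis (mono_tags, lifting) mem_Collect_eq one_neq_zero)

lemma hclass_scal: assumes "c \<noteq> 0" shows "hclass (scal2 c ` L) = hclass L"
proof -
  have "hclass (scal2 c ` L) \<subseteq> hclass L"
    unfolding hclass_def using assms by (auto simp: scal2_scal2)
  moreover have "hclass L \<subseteq> hclass (scal2 c ` L)"
  proof
    fix X assume "X \<in> hclass L"
    then obtain d where d: "d \<noteq> 0" "X = scal2 d ` L" unfolding hclass_def by auto
    have "X = scal2 (d / c) ` (scal2 c ` L)" using d assms by (simp add: scal2_scal2)
    moreover have "d / c \<noteq> 0" using d assms by simp
    ultimately show "X \<in> hclass (scal2 c ` L)" unfolding hclass_def by blast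
  qed
  ultimately show ?thesis by blast
qed

lemma hclass_eqD: "hclass L1 = hclass L2 \<Longrightarrow> \<exists>c. c \<noteq> 0 \<and> L1 = scal2 c ` L2"
  using hclass_self[of L1] unfolding hclass_def by auto

lemma hclass_mem: assumes "L' \<in> hclass L" shows "hclass L' = hclass L"
proof -
  obtain c where "c \<noteq> 0" "L' = scal2 c ` L" using assms unfolding hclass_def by auto
  then show ?thesis using hclass_scal by simp
qed

lemma mat_scal2: "mat_apply M (scal2 c x) = scal2 c (mat_apply M x)"
  by (cases M; cases x) (simp add: scal2_def algebra_simps)

lemma mat_scal2_img: "mat_apply M ` (scal2 c ` L) = scal2 c ` (mat_apply M ` L)"
  by (simp add: image_image mat_scal2)

lemma gl_act_hclass: "gl_act M (hclass L) = hclass (mat_apply M ` L)"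
proof (rule set_eqI, rule iffI)
  fix X assume "X \<in> gl_act M (hclass L)"
  then obtain c where "c \<noteq> 0" "X = mat_apply M ` (scal2 c ` L)" unfolding gl_act_def hclass_def by auto
  then show "X \<in> hclass (mat_apply M ` L)" unfolding hclass_def by (auto simp: mat_scal2_img)
next
  fix X assume "X \<in> hclass (mat_apply M ` L)"
  then obtain c where "c \<noteq> 0" "X = mat_apply M ` (scal2 c ` L)" unfolding hclass_def by (auto simp: mat_scal2_img)
  then show "X \<in> gl_act M (hclass L)" unfolding gl_act_def hclass_def by auto
qed

definition mmul :: "'a::field mat2 \<Rightarrow> 'a mat2 \<Rightarrow> 'a mat2" where
  "mmul A B = (case A of (a,b,c,d) \<Rightarrow> case B of (a',b',c',d') \<Rightarrow>
     (a*a' + b*c', a*b' + b*d', c*a' + d*c', c*b' + d*d'))"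

lemma mmul_apply: "mat_apply (mmul A B) x = mat_apply A (mat_apply B x)"
  by (cases A; cases B; cases x) (simp add: mmul_def algebra_simps)

lemma mmul_det: "mat_det (mmul A B) = mat_det A * mat_det B"
  by (cases A; cases B) (simp add: mmul_def algebra_simps)

lemma gl_act_mmul: "gl_act (mmul A B) x = gl_act A (gl_act B x)"
  unfolding gl_act_def by (simp add: image_image mmul_apply)

definition madj :: "'a::field mat2 \<Rightarrow> 'a mat2" where
  "madj A = (case A of (a,b,c,d) \<Rightarrow> (d, -b, -c, a))"
definition smat :: "'a::field \<Rightarrow> 'a mat2 \<Rightarrow> 'a mat2" where
  "smat s A = (case A of (a,b,c,d) \<Rightarrow> (s*a, s*b, s*c, s*d))"
definition minv :: "'a::field mat2 \<Rightarrow> 'a mat2" where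
  "minv A = smat (inverse (mat_det A)) (madj A)"

lemma smat_apply: "mat_apply (smat s A) x = scal2 s (mat_apply A x)"
  by (cases A; cases x) (simp add: smat_def scal2_def algebra_simps)

lemma madj_apply1: "mat_apply (madj A) (mat_apply A x) = scal2 (mat_det A) x"
  by (cases A; cases x) (simp add: madj_def scal2_def algebra_simps)
lemma madj_apply2: "mat_apply A (mat_apply (madj A) x) = scal2 (mat_det A) x"
  by (cases A; cases x) (simp add: madj_def scal2_def algebra_simps)

lemma minv_apply1: "mat_det A \<noteq> 0 \<Longrightarrow> mat_apply (minv A) (mat_apply A x) = x"
  by (cases x) (simp add: minv_def smat_apply madj_apply1 scal2_def mult.assoc[symmetric])
lemma minv_apply2: "mat_det A \<noteq> 0 \<Longrightarrow> mat_apply A (mat_apply (minv A) x) = x"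
proof -
  assume h: "mat_det A \<noteq> 0"
  have "mat_apply A (mat_apply (minv A) x) = scal2 (inverse (mat_det A)) (mat_apply A (mat_apply (madj A) x))"
    by (simp add: minv_def smat_apply mat_scal2)
  also have "\<dots> = x" using h by (cases x) (simp add: madj_apply2 scal2_def mult.assoc[symmetric])
  finally show ?thesis .
qed

lemma madj_det: "mat_det (madj A) = mat_det A"
  by (cases A) (simp add: madj_def algebra_simps)

lemma smat_det: "mat_det (smat s A) = s * s * mat_det A"
  by (cases A) (simp add: smat_def algebra_simps)

lemma minv_det: "mat_det A \<noteq> 0 \<Longrightarrow> mat_det (minv A) \<noteq> 0"
  by (simp add: minv_def smat_det madj_det)

context nlf begin

lemma vertices_lat: "x \<in> vertices v \<longleftrightarrow> (\<exists>u w. dt u w \<noteq> 0 \<and> x = hclass (lat u w))"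
proof
  assume "x \<in> vertices v"
  then obtain L where "x = hclass L" "is_lattice v L" unfolding vertices_def by blast
  then show "\<exists>u w. dt u w \<noteq> 0 \<and> x = hclass (lat u w)" unfolding is_lattice_lat by blast
next
  assume "\<exists>u w. dt u w \<noteq> 0 \<and> x = hclass (lat u w)"
  then obtain u w where "dt u w \<noteq> 0" "x = hclass (lat u w)" by blast
  then have "is_lattice v (lat u w)" "x = hclass (lat u w)" unfolding is_lattice_lat by blast+
  then show "x \<in> vertices v" unfolding vertices_def by blast
qed

lemma hclass_lat_vertex: "dt u w \<noteq> 0 \<Longrightarrow> hclass (lat u w) \<in> vertices v"
  using vertices_lat by blast

lemma adj_sym: assumes "adj v x y" shows "adj v y x"
proof -
  have xy: "x \<in> vertices v" "y \<in> vertices v" using assms unfolding adj_def by simp_all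
  obtain L L' q where h: "L \<in> x" "L' \<in> y" "q \<noteq> 0" "v q = 1" "scal2 q ` L \<subset> L'" "L' \<subset> L"
    using assms unfolding adj_def by metis
  obtain L1 where x: "x = hclass L1" using xy(1) unfolding vertices_def by auto
  have "hclass L = hclass L1" using hclass_mem h(1) x by simp
  then have "hclass (scal2 q ` L) = x" using hclass_scal[OF h(3)] x by simp
  then have m: "scal2 q ` L \<in> x" using hclass_self[of "scal2 q ` L"] by simp
  have s: "scal2 q ` L' \<subset> scal2 q ` L" using h(6) scal2_inj[OF h(3)]
    by (simp add: inj_image_subset_iff psubset_eq inj_image_eq_iff)
  have "\<exists>L\<in>y. \<exists>L'\<in>x. \<exists>p. p \<noteq> 0 \<and> v p = 1 \<and> scal2 p ` L \<subset> L' \<and> L' \<subset> L"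
  proof (rule bexI[OF _ h(2)], rule bexI[OF _ m], rule exI[of _ q])
    show "q \<noteq> 0 \<and> v q = 1 \<and> scal2 q ` L' \<subset> scal2 q ` L \<and> scal2 q ` L \<subset> L'" using h(3,4,5) s by simp
  qed
  then show ?thesis unfolding adj_def using xy by (intro conjI)
qed

lemma adj_step: assumes "dt u w \<noteq> 0"
  shows "adj v (hclass (lat u w)) (hclass (lat (scal2 p u) w))"
proof -
  let ?L = "lat u w" and ?L' = "lat (scal2 p u) w"
  have d': "dt (scal2 p u) w \<noteq> 0" using assms p0 by (simp add: dt_def scal2_def algebra_simps)
  have sL: "scal2 p ` ?L = lat (scal2 p u) (scal2 p w)" by (rule scal_lat)
  have ps: "ge 0 p" using ge_p ge_mono by auto
  have 1: "?L' \<subseteq> ?L" by (rule lat_sub) (auto simp: lat_smul lat_u lat_w ps)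
  have 2: "scal2 p ` ?L \<subseteq> ?L'" unfolding sL by (rule lat_sub) (auto simp: lat_smul lat_u lat_w ps)
  have 3: "u \<notin> ?L'"
  proof
    assume "u \<in> ?L'"
    then obtain a b where ab: "u = lin a (scal2 p u) b w" "ge 0 a" "ge 0 b" unfolding lat_def by auto
    have e: "lin 1 u 0 w = lin (a * p) u b w" using ab(1) by (simp add: lin_def scal2_def algebra_simps)
    have "a * p = 1" using lin_indep(1)[OF assms e] by simp
    moreover have "a \<noteq> 0" using \<open>a*p = 1\<close> by auto
    ultimately have "v a + 1 = 0" using vmult[of a p] vp v1 p0 by simp
    then show False using ab(2) \<open>a \<noteq> 0\<close> by (simp add: ge_def)
  qed
  have 4: "w \<notin> scal2 p ` ?L"
  proof
    assume "w \<in> scal2 p ` ?L"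
    then have "w \<in> lat (scal2 p u) (scal2 p w)" using sL by simp
    then obtain a b where ab: "w = lin a (scal2 p u) b (scal2 p w)" "ge 0 a" "ge 0 b" unfolding lat_def by blast
    have e: "lin 0 u 1 w = lin (a * p) u (b * p) w" using ab(1) by (simp add: lin_def scal2_def algebra_simps)
    have "b * p = 1" using lin_indep(2)[OF assms e] by simp
    moreover have "b \<noteq> 0" using \<open>b*p = 1\<close> by auto
    ultimately have "v b + 1 = 0" using vmult[of b p] vp v1 p0 by simp
    then show False using ab(3) \<open>b \<noteq> 0\<close> by (simp add: ge_def)
  qed
  have s1: "scal2 p ` ?L \<subset> ?L'" using 2 4 lat_w by blast
  have s2: "?L' \<subset> ?L" using 1 3 lat_u by blast
  have "\<exists>L\<in>hclass ?L. \<exists>L'\<in>hclass ?L'. \<exists>p. p \<noteq> 0 \<and> v p = 1 \<and> scal2 p ` L \<subset> L' \<and> L' \<subset> L"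
    using hclass_self[of ?L] hclass_self[of ?L'] s1 s2 p0 vp by (intro bexI exI conjI)
  then show ?thesis unfolding adj_def
    by (intro conjI hclass_lat_vertex[OF assms] hclass_lat_vertex[OF d'])
qed

lemma tdist_le: assumes "P 0 = x" "P n = y" "\<And>i. i < n \<Longrightarrow> adj v (P i) (P (Suc i))"
  shows "tdist v x y \<le> n"
  unfolding tdist_def by (rule Least_le) (use assms in blast)

lemma scal2_pow_Suc: "scal2 (p ^ Suc i) u = scal2 p (scal2 (p ^ i) u)"
  by (simp add: scal2_def algebra_simps)

lemma tdist_ray: assumes "dt u w \<noteq> 0"
  shows "tdist v (hclass (lat (scal2 (p ^ k) u) w)) (hclass (lat u w)) \<le> k"
proof (rule tdist_le[where P = "\<lambda>i. hclass (lat (scal2 (p ^ (k - i)) u) w)"])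
  show "hclass (lat (scal2 (p ^ (k - k)) u) w) = hclass (lat u w)" by (simp add: scal2_def)
next
  fix i assume i: "i < k"
  have d: "dt (scal2 (p ^ (k - Suc i)) u) w \<noteq> 0" using assms p0 by (simp add: dt_def scal2_def algebra_simps)
  have "k - i = Suc (k - Suc i)" using i by simp
  then show "adj v (hclass (lat (scal2 (p ^ (k - i)) u) w)) (hclass (lat (scal2 (p ^ (k - Suc i)) u) w))"
    using adj_sym[OF adj_step[OF d]] by (simp only: scal2_pow_Suc)
qed simp

end

lemma gl_act_inv: "(\<And>z. mat_apply A (mat_apply B z) = z) \<Longrightarrow> gl_act A (gl_act B x) = x"
  unfolding gl_act_def by (simp add: image_image)

lemma mat_inj: "mat_det M \<noteq> 0 \<Longrightarrow> inj (mat_apply M)"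
  by (metis injI minv_apply1)

lemma dt_mat: "dt (mat_apply M u) (mat_apply M w) = mat_det M * dt u w"
  by (cases M; cases u; cases w) (simp add: dt_def algebra_simps)

context nlf begin

lemma gl_act_vertex: assumes "mat_det M \<noteq> 0" "x \<in> vertices v" shows "gl_act M x \<in> vertices v"
proof -
  obtain u w where "dt u w \<noteq> 0" "x = hclass (lat u w)" using assms(2) vertices_lat by blast
  then show ?thesis using assms(1) by (simp add: gl_act_hclass mat_lat hclass_lat_vertex dt_mat)
qed

lemma gl_act_adj: assumes "mat_det M \<noteq> 0" "adj v x y" shows "adj v (gl_act M x) (gl_act M y)"
proof -
  have xy: "x \<in> vertices v" "y \<in> vertices v" using assms unfolding adj_def by simp_all
  obtain L L' q where h: "L \<in> x" "L' \<in> y" "q \<noteq> 0" "v q = 1" "scal2 q ` L \<subset> L'" "L' \<subset> L"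
    using assms unfolding adj_def by metis
  let ?f = "mat_apply M"
  have i: "inj ?f" using mat_inj[OF assms(1)] .
  have m1: "?f ` L \<in> gl_act M x" using h(1) unfolding gl_act_def by blast
  have m2: "?f ` L' \<in> gl_act M y" using h(2) unfolding gl_act_def by blast
  have s1: "scal2 q ` (?f ` L) \<subset> ?f ` L'" using h(5) i
    by (simp add: mat_scal2_img[symmetric] inj_image_subset_iff psubset_eq inj_image_eq_iff)
  have s2: "?f ` L' \<subset> ?f ` L" using h(6) i
    by (simp add: inj_image_subset_iff psubset_eq inj_image_eq_iff)
  have "\<exists>L\<in>gl_act M x. \<exists>L'\<in>gl_act M y. \<exists>p. p \<noteq> 0 \<and> v p = 1 \<and> scal2 p ` L \<subset> L' \<and> L' \<subset> L"
  proof (rule bexI[OF _ m1], rule bexI[OF _ m2], rule exI[of _ q])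
    show "q \<noteq> 0 \<and> v q = 1 \<and> scal2 q ` (?f ` L) \<subset> ?f ` L' \<and> ?f ` L' \<subset> ?f ` L" using h(3,4) s1 s2 by simp
  qed
  then show ?thesis unfolding adj_def using gl_act_vertex[OF assms(1)] xy by (intro conjI) simp_all
qed

definition paths :: "'a vec2 set set \<Rightarrow> 'a vec2 set set \<Rightarrow> nat set" where
  "paths x y = {n. \<exists>P::nat \<Rightarrow> 'a vec2 set set. P 0 = x \<and> P n = y \<and> (\<forall>i<n. adj v (P i) (P (Suc i)))}"

lemma tdist_paths: "tdist v x y = (LEAST n. n \<in> paths x y)"
  unfolding tdist_def paths_def by simp

lemma paths_map: assumes "\<And>a b. adj v a b \<Longrightarrow> adj v (f a) (f b)" "n \<in> paths x y"
  shows "n \<in> paths (f x) (f y)"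
proof -
  obtain P where "P 0 = x" "P n = y" "\<forall>i<n. adj v (P i) (P (Suc i))" using assms(2) paths_def by auto
  then show ?thesis unfolding paths_def using assms(1) by (intro CollectI exI[of _ "f \<circ> P"]) auto
qed

lemma tdist_gl: assumes "mat_det M \<noteq> 0"
  shows "tdist v (gl_act M x) (gl_act M y) = tdist v x y"
proof -
  have d: "mat_det (minv M) \<noteq> 0" using minv_det[OF assms] .
  have "paths (gl_act M x) (gl_act M y) = paths x y"
  proof
    show "paths x y \<subseteq> paths (gl_act M x) (gl_act M y)"
      using paths_map[of "gl_act M"] gl_act_adj[OF assms] by blast
    show "paths (gl_act M x) (gl_act M y) \<subseteq> paths x y"
    proof
      fix n assume "n \<in> paths (gl_act M x) (gl_act M y)"
      then have "n \<in> paths (gl_act (minv M) (gl_act M x)) (gl_act (minv M) (gl_act M y))"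
        using paths_map[of "gl_act (minv M)"] gl_act_adj[OF d] by blast
      then show "n \<in> paths x y" using gl_act_inv[of "minv M" M] minv_apply1[OF assms] by simp
    qed
  qed
  then show ?thesis by (simp add: tdist_paths)
qed

lemma pgl_tree_aut: assumes "mat_det M \<noteq> 0" shows "pgl_aut v M \<in> tree_aut v"
proof -
  have d: "mat_det (minv M) \<noteq> 0" using minv_det[OF assms] .
  have inv1: "\<And>x. gl_act (minv M) (gl_act M x) = x" using gl_act_inv minv_apply1[OF assms] by blast
  have inv2: "\<And>x. gl_act M (gl_act (minv M) x) = x" using gl_act_inv minv_apply2[OF assms] by blast
  have "bij_betw (pgl_aut v M) (vertices v) (vertices v)"
  proof (rule bij_betw_byWitness[where f' = "gl_act (minv M)"])
    show "\<forall>a\<in>vertices v. gl_act (minv M) (pgl_aut v M a) = a" using inv1 by (simp add: pgl_aut_def)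
    show "\<forall>a'\<in>vertices v. pgl_aut v M (gl_act (minv M) a') = a'"
      using inv2 gl_act_vertex[OF d] by (simp add: pgl_aut_def)
    show "pgl_aut v M ` vertices v \<subseteq> vertices v" using gl_act_vertex[OF assms] by (auto simp: pgl_aut_def)
    show "gl_act (minv M) ` vertices v \<subseteq> vertices v" using gl_act_vertex[OF d] by auto
  qed
  then show ?thesis unfolding tree_aut_def using tdist_gl[OF assms] by (auto simp: pgl_aut_def)
qed

lemma PGL_sub_aut: "PGL_in_Aut v \<subseteq> tree_aut v"
  unfolding PGL_in_Aut_def using pgl_tree_aut by blast

end

context nlf begin

definition L0 :: "'a vec2 set" where "L0 = lat (1,0) (0,1)"

lemma ge_div_pow_iff: "ge 0 (x / p ^ k) \<longleftrightarrow> ge (int k) x"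
proof
  assume "ge 0 (x / p ^ k)"
  then have "ge (0 + int k) (x / p ^ k * p ^ k)" by (rule ge_mult_pow)
  then show "ge (int k) x" using p0 by simp
next
  assume "ge (int k) x" then show "ge 0 (x / p ^ k)" using ge_div_pow[of "int k" x k] by simp
qed

lemma mem_L0: "x \<in> L0 \<longleftrightarrow> ge 0 (fst x) \<and> ge 0 (snd x)"
  unfolding L0_def by (subst lat_mem_iff) (simp_all add: dt_def)

definition T1 :: "nat \<Rightarrow> 'a vec2 set" where "T1 k = lat (scal2 (p^k) (1,0)) (0,1)"
definition T2 :: "nat \<Rightarrow> 'a vec2 set" where "T2 k = lat (scal2 (p^k) (0,1)) (1,0)"
definition T3 :: "nat \<Rightarrow> 'a vec2 set" where "T3 k = lat (scal2 (p^k) (1,0)) (1,1)"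

lemma mem_T1: "x \<in> T1 k \<longleftrightarrow> ge (int k) (fst x) \<and> ge 0 (snd x)"
  unfolding T1_def using p0 by (subst lat_mem_iff) (simp_all add: dt_def scal2_def ge_div_pow_iff)

lemma mem_T2: "x \<in> T2 k \<longleftrightarrow> ge 0 (fst x) \<and> ge (int k) (snd x)"
proof -
  have "x \<in> T2 k \<longleftrightarrow> ge 0 ((fst x * 0 - snd x * 1) / (-(p ^ k))) \<and> ge 0 ((0 * snd x - p^k * fst x) / (-(p^k)))"
    unfolding T2_def using p0 by (subst lat_mem_iff) (simp_all add: dt_def scal2_def)
  also have "\<dots> \<longleftrightarrow> ge 0 (snd x / p ^ k) \<and> ge 0 (fst x)" using p0 by simp
  finally show ?thesis using ge_div_pow_iff by blast
qed

lemma mem_T3: "x \<in> T3 k \<longleftrightarrow> ge (int k) (fst x - snd x) \<and> ge 0 (snd x)"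
proof -
  have "x \<in> T3 k \<longleftrightarrow> ge 0 ((fst x * 1 - snd x * 1) / p ^ k) \<and> ge 0 ((p^k * snd x - 0 * fst x) / p^k)"
    unfolding T3_def using p0 by (subst lat_mem_iff) (simp_all add: dt_def scal2_def)
  also have "\<dots> \<longleftrightarrow> ge 0 ((fst x - snd x) / p ^ k) \<and> ge 0 (snd x)" using p0 by simp
  finally show ?thesis using ge_div_pow_iff by blast
qed

lemma T_sub_L0: "T1 k \<subseteq> L0" "T2 k \<subseteq> L0" "T3 k \<subseteq> L0"
proof -
  show "T1 k \<subseteq> L0" using mem_T1 mem_L0 ge_mono by fastforce
  show "T2 k \<subseteq> L0" using mem_T2 mem_L0 ge_mono by fastforce
  show "T3 k \<subseteq> L0"
  proof
    fix x assume "x \<in> T3 k"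
    then have "ge 0 (fst x - snd x)" "ge 0 (snd x)" using mem_T3 ge_mono by fastforce+
    then have "ge 0 ((fst x - snd x) + snd x)" by (rule ge_add)
    then show "x \<in> L0" using \<open>ge 0 (snd x)\<close> mem_L0 by simp
  qed
qed

lemma L0_alt: "lat (0,1) (1,0) = L0" "lat (1,0) (1,1) = L0"
proof -
  show "lat (0,1) (1,0) = L0" unfolding L0_def by (rule lat_sym)
  show "lat (1,0) (1,1) = L0" unfolding L0_def
    by (rule lat_eq) (auto simp: mem_L0[unfolded L0_def] lat_u lat_mem_iff dt_def)
qed

definition x1 where "x1 = hclass L0"

lemma tdist_T: "tdist v (hclass (T1 k)) x1 \<le> k" "tdist v (hclass (T2 k)) x1 \<le> k" "tdist v (hclass (T3 k)) x1 \<le> k"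
  using tdist_ray[of "(1,0)" "(0,1)" k] tdist_ray[of "(0,1)" "(1,0)" k] tdist_ray[of "(1,0)" "(1,1)" k]
  by (simp_all add: T1_def T2_def T3_def x1_def L0_alt dt_def) (simp add: L0_def)

lemma x1_vertex: "x1 \<in> vertices v"
  unfolding x1_def L0_def by (rule hclass_lat_vertex) (simp add: dt_def)

lemma adj_x1: "adj v x1 (hclass (T1 1))"
  unfolding x1_def L0_def T1_def using adj_step[of "(1,0)" "(0,1)"] by (simp add: dt_def)

end

context nlf begin

definition intm :: "'a mat2 \<Rightarrow> bool" where
  "intm M = (case M of (a,b,c,d) \<Rightarrow> ge 0 a \<and> ge 0 b \<and> ge 0 c \<and> ge 0 d)"

lemma intm_iff: "intm M \<longleftrightarrow> mat_apply M (1,0) \<in> L0 \<and> mat_apply M (0,1) \<in> L0"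
  by (cases M) (auto simp: intm_def mem_L0)

lemma intm_det: "intm M \<Longrightarrow> ge 0 (mat_det M)"
  by (cases M) (auto simp: intm_def intro!: ge_diff ge_mult0)

lemma fix_set: assumes "gl_act N (hclass L) = hclass L"
  shows "\<exists>c. c \<noteq> 0 \<and> mat_apply N ` L = scal2 c ` L"
  using hclass_eqD assms by (simp add: gl_act_hclass)

lemma unit_scal_lat: assumes "c \<noteq> 0" "v c = 0" shows "scal2 c ` lat u w = lat u w"
proof -
  have g: "ge 0 c" "ge 0 (inverse c)" using assms by (simp_all add: ge_def vinv)
  have "lat (scal2 c u) (scal2 c w) = lat u w"
  proof (rule lat_eq)
    show "scal2 c u \<in> lat u w" "scal2 c w \<in> lat u w" using g by (simp_all add: lat_smul lat_u lat_w)
    have "u = scal2 (inverse c) (scal2 c u)" "w = scal2 (inverse c) (scal2 c w)"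
      using assms by (simp_all add: scal2_def mult.assoc[symmetric])
    then show "u \<in> lat (scal2 c u) (scal2 c w)" "w \<in> lat (scal2 c u) (scal2 c w)"
      using g by (metis lat_smul lat_u lat_w)+
  qed
  then show ?thesis by (simp add: scal_lat)
qed

lemma scal2_comp_img: "scal2 a ` (scal2 b ` L) = scal2 (a*b) ` L" by (rule scal2_scal2)

lemma fix_generic:
  assumes N0L: "mat_apply N0 ` L0 = L0" and d: "mat_det N0 \<noteq> 0"
    and T: "T = lat u w" "T \<subseteq> L0" and z: "z \<in> T" and zp: "\<And>c. scal2 c z \<in> L0 \<Longrightarrow> ge 0 c"
    and k: "\<kappa> \<noteq> 0" "mat_apply N0 ` T = scal2 \<kappa> ` T"
  shows "mat_apply N0 ` T = T"
proof -
  have "scal2 \<kappa> z \<in> L0" using z k(2) T(2) N0L by blast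
  then have g1: "ge 0 \<kappa>" using zp by blast
  have "mat_apply N0 z \<in> scal2 \<kappa> ` T" using z k(2) by blast
  then obtain t where t: "t \<in> T" "mat_apply N0 z = scal2 \<kappa> t" by blast
  obtain s where s: "s \<in> L0" "t = mat_apply N0 s" using t(1) T(2) N0L by blast
  have "scal2 (inverse \<kappa>) z = s"
  proof -
    have "mat_apply N0 (scal2 (inverse \<kappa>) z) = scal2 (inverse \<kappa>) (mat_apply N0 z)" by (rule mat_scal2)
    also have "\<dots> = scal2 (inverse \<kappa>) (scal2 \<kappa> t)" using t by simp
    also have "\<dots> = t" using k(1) by (cases t) (simp add: scal2_def mult.assoc[symmetric])
    finally have "mat_apply N0 (scal2 (inverse \<kappa>) z) = mat_apply N0 s" using s by simp
    then show ?thesis using mat_inj[OF d] by (simp add: inj_eq)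
  qed
  then have g2: "ge 0 (inverse \<kappa>)" using zp s(1) by blast
  have "v \<kappa> = 0" using g1 g2 k(1) by (simp add: ge_def vinv)
  then show ?thesis using k unit_scal_lat T(1) by simp
qed

lemma fixer:
  assumes d: "mat_det N \<noteq> 0" and k: "1 \<le> k"
    and f0: "gl_act N x1 = x1"
    and f1: "gl_act N (hclass (T1 k)) = hclass (T1 k)"
    and f2: "gl_act N (hclass (T2 k)) = hclass (T2 k)"
    and f3: "gl_act N (hclass (T3 k)) = hclass (T3 k)"
  shows "\<exists>\<mu> e1 e2 e3 e4. \<mu> \<noteq> 0 \<and> ge (int k) e1 \<and> ge (int k) e2 \<and> ge (int k) e3 \<and> ge (int k) e4 \<and>
           N = (\<mu> * (1 + e1), \<mu> * e2, \<mu> * e3, \<mu> * (1 + e4))"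
proof -
  obtain c0 where c0: "c0 \<noteq> 0" "mat_apply N ` L0 = scal2 c0 ` L0" using fix_set f0 x1_def by metis
  define N0 where "N0 = smat (inverse c0) N"
  have N0a: "\<And>x. mat_apply N0 x = scal2 (inverse c0) (mat_apply N x)" by (simp add: N0_def smat_apply)
  have N0i: "\<And>L. mat_apply N0 ` L = scal2 (inverse c0) ` (mat_apply N ` L)"
    by (simp add: N0a image_image)
  have dN0: "mat_det N0 \<noteq> 0" using d c0 by (simp add: N0_def smat_det)
  have N0L: "mat_apply N0 ` L0 = L0" using c0 by (simp add: N0i scal2_scal2 scal2_1)
  have Tk: "\<And>T u w z. T = lat u w \<Longrightarrow> T \<subseteq> L0 \<Longrightarrow> z \<in> T \<Longrightarrow> (\<And>c. scal2 c z \<in> L0 \<Longrightarrow> ge 0 c) \<Longrightarrow>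
        gl_act N (hclass T) = hclass T \<Longrightarrow> mat_apply N0 ` T = T"
  proof -
    fix T u w z assume a: "T = lat u w" "T \<subseteq> L0" "z \<in> T" "\<And>c. scal2 c z \<in> L0 \<Longrightarrow> ge 0 c"
      "gl_act N (hclass T) = hclass T"
    obtain c where c: "c \<noteq> 0" "mat_apply N ` T = scal2 c ` T" using fix_set[OF a(5)] by blast
    have "mat_apply N0 ` T = scal2 (inverse c0 * c) ` T" using c by (simp add: N0i scal2_scal2)
    then show "mat_apply N0 ` T = T" using fix_generic[OF N0L dN0 a(1-4)] c c0 by simp
  qed
  have M1: "mat_apply N0 ` T1 k = T1 k"
    by (rule Tk[OF T1_def T_sub_L0(1), of "(0,1)"]) (auto simp: mem_T1 mem_L0 scal2_def f1)
  have M2: "mat_apply N0 ` T2 k = T2 k"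
    by (rule Tk[OF T2_def T_sub_L0(2), of "(1,0)"]) (auto simp: mem_T2 mem_L0 scal2_def f2)
  have M3: "mat_apply N0 ` T3 k = T3 k"
    by (rule Tk[OF T3_def T_sub_L0(3), of "(1,1)"]) (auto simp: mem_T3 mem_L0 scal2_def f3)
  obtain a b c d where abcd: "N0 = (a,b,c,d)" by (cases N0)
  have "mat_apply N0 (1,0) \<in> L0" "mat_apply N0 (0,1) \<in> L0" "mat_apply N0 (1,1) \<in> L0"
    using N0L by (auto simp: mem_L0)
  then have iN0: "ge 0 a" "ge 0 b" "ge 0 c" "ge 0 d" using abcd by (auto simp: mem_L0)
  have "mat_apply N0 (0,1) \<in> T1 k" using M1 by (auto simp: mem_T1)
  then have gb: "ge (int k) b" using abcd by (simp add: mem_T1)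
  have "mat_apply N0 (1,0) \<in> T2 k" using M2 by (auto simp: mem_T2)
  then have gc: "ge (int k) c" using abcd by (simp add: mem_T2)
  have "mat_apply N0 (1,1) \<in> T3 k" using M3 by (auto simp: mem_T3)
  then have g3: "ge (int k) (a + b - (c + d))" using abcd by (simp add: mem_T3)
  have gda: "ge (int k) (d - a)"
  proof -
    have "d - a = b - c - (a + b - (c + d))" by (simp add: algebra_simps)
    then show ?thesis using gb gc g3 by (metis ge_diff)
  qed
  have inv_int: "\<And>x. x \<in> L0 \<Longrightarrow> mat_apply (minv N0) x \<in> L0"
  proof -
    fix x assume "x \<in> L0"
    then obtain s where "s \<in> L0" "x = mat_apply N0 s" using N0L by blast
    then show "mat_apply (minv N0) x \<in> L0" using minv_apply1[OF dN0] by simp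
  qed
  have "intm (minv N0)" unfolding intm_iff using inv_int by (simp add: mem_L0)
  then have "ge 0 (mat_det (minv N0))" by (rule intm_det)
  moreover have "mat_det (minv N0) = inverse (mat_det N0)"
    using dN0 by (simp add: minv_def smat_det madj_det)
  ultimately have gi: "ge 0 (inverse (mat_det N0))" by simp
  have "intm N0" using iN0 abcd by (simp add: intm_def)
  then have "ge 0 (mat_det N0)" by (rule intm_det)
  then have vdet: "v (mat_det N0) = 0" using gi dN0 by (simp add: ge_def vinv)
  have bc: "ge (int k + int k) (b * c)" using gb gc by (rule ge_mult)
  have "ge 1 (b * c)" using ge_mono[OF bc, of 1] k by simp
  moreover have "a * d - mat_det N0 = b * c" using abcd by simp
  ultimately have "a * d \<noteq> 0 \<and> v (a * d) = 0" using unit_close[OF dN0 vdet, of "a * d"] by simp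
  then have va: "v a = 0" "a \<noteq> 0" using unit_prod(1)[OF iN0(1) iN0(4)] by auto
  have ia: "ge 0 (inverse a)" using va by (simp add: ge_unit_inv)
  have NN0: "N = smat c0 N0" using c0 by (cases N) (simp add: N0_def smat_def mult.assoc[symmetric])
  show ?thesis
  proof (intro exI conjI)
    show "c0 * a \<noteq> 0" using c0 va by simp
    show "ge (int k) 0" by simp
    show "ge (int k) (b / a)" using gb ia by (simp add: divide_inverse ge_multk)
    show "ge (int k) (c / a)" using gc ia by (simp add: divide_inverse ge_multk)
    show "ge (int k) ((d - a) / a)" using gda ia by (simp add: divide_inverse ge_multk)
    show "N = (c0 * a * (1 + 0), c0 * a * (b / a), c0 * a * (c / a), c0 * a * (1 + (d - a) / a))"
      using va(2) by (simp add: NN0 abcd smat_def field_simps)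
  qed
qed

end

context nlf begin

definition near :: "int \<Rightarrow> 'a mat2 \<Rightarrow> bool" where
  "near e T \<longleftrightarrow> (\<exists>t1 t2 t3 t4. ge e t1 \<and> ge e t2 \<and> ge e t3 \<and> ge e t4 \<and> T = (1 + t1, t2, t3, 1 + t4))"

lemma ge_div: "ge k x \<Longrightarrow> y \<noteq> 0 \<Longrightarrow> ge (k - v y) (x / y)"
  unfolding ge_def by (cases "x = 0") (auto simp: vdiv)

lemma ge_self: "ge (v x) x" by (simp add: ge_def)

lemma ge_abs: "ge (- \<bar>v x\<bar>) x" using ge_mono[OF ge_self[of x]] by simp

lemma near_det: assumes "near e T" "1 \<le> e"
  shows "mat_det T \<noteq> 0 \<and> v (mat_det T) = 0 \<and> ge e (mat_det T - 1)"
proof -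
  obtain t1 t2 t3 t4 where t: "ge e t1" "ge e t2" "ge e t3" "ge e t4" "T = (1 + t1, t2, t3, 1 + t4)"
    using assms(1) near_def by auto
  have eq: "mat_det T - 1 = t1 + t4 + t1 * t4 - t2 * t3" using t(5) by (simp add: algebra_simps)
  have "ge e (t1 * t4)" using ge_mono[OF ge_mult[OF t(1) t(4)], of e] assms(2) by simp
  moreover have "ge e (t2 * t3)" using ge_mono[OF ge_mult[OF t(2) t(3)], of e] assms(2) by simp
  ultimately have "ge e (t1 * t4)" "ge e (t2 * t3)" by simp_all
  then have g: "ge e (mat_det T - 1)" unfolding eq using t by (intro ge_diff ge_add)
  then have "ge 1 (mat_det T - 1)" using assms(2) ge_mono by blast
  then show ?thesis using unit_close[of 1 "mat_det T"] v1 g by simp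
qed

lemma near_minv: assumes "near e T" "1 \<le> e" shows "near e (minv T)"
proof -
  obtain t1 t2 t3 t4 where t: "ge e t1" "ge e t2" "ge e t3" "ge e t4" "T = (1 + t1, t2, t3, 1 + t4)"
    using assms(1) near_def by auto
  have D: "mat_det T \<noteq> 0" "v (mat_det T) = 0" "ge e (mat_det T - 1)" using near_det[OF assms] by auto
  define i where "i = inverse (mat_det T)"
  have gi: "ge 0 i" using D by (simp add: i_def ge_unit_inv)
  have "i - 1 = - ((mat_det T - 1) * i)" using D(1) by (simp add: i_def field_simps)
  then have gi1: "ge e (i - 1)" using D(3) gi by (simp add: ge_multk)
  define s where "s = i - 1"
  have ii: "i = 1 + s" by (simp add: s_def)
  have gs: "ge e s" using gi1 s_def by simp
  have ge0e: "0 \<le> e" using assms(2) by simp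
  have m: "ge e (s * t4)" "ge e (s * t1)"
    using ge_mono[OF ge_mult[OF gs t(4)], of e] ge_mono[OF ge_mult[OF gs t(1)], of e] ge0e by simp_all
  have "minv T = smat i (madj T)" by (simp add: minv_def i_def)
  also have "\<dots> = (i * (1 + t4), i * (- t2), i * (- t3), i * (1 + t1))" using t(5) by (simp add: madj_def smat_def)
  also have "\<dots> = (1 + (s + t4 + s * t4), i * (- t2), i * (- t3), 1 + (s + t1 + s * t1))"
    by (simp add: ii algebra_simps)
  finally have "minv T = (1 + (s + t4 + s * t4), i * (- t2), i * (- t3), 1 + (s + t1 + s * t1))" .
  moreover have "ge e (s + t4 + s * t4)" "ge e (s + t1 + s * t1)" using gs t m by (auto intro: ge_add)
  moreover have "ge e (i * (- t2))" "ge e (i * (- t3))" using gi t by (auto intro: ge_multk')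
  ultimately show ?thesis unfolding near_def by blast
qed

lemma near_sub: assumes "dt u w \<noteq> 0"
  shows "\<exists>m::int. \<forall>e\<ge>m. \<forall>T. near e T \<longrightarrow> mat_apply T ` lat u w \<subseteq> lat u w"
proof -
  define K where "K = \<bar>v (fst u)\<bar> + \<bar>v (snd u)\<bar> + \<bar>v (fst w)\<bar> + \<bar>v (snd w)\<bar>"
  define D where "D = \<bar>v (dt u w)\<bar>"
  have Kc: "ge (-K) (fst u)" "ge (-K) (snd u)" "ge (-K) (fst w)" "ge (-K) (snd w)"
    using ge_mono[OF ge_abs[of "fst u"], of "-K"] ge_mono[OF ge_abs[of "snd u"], of "-K"]
      ge_mono[OF ge_abs[of "fst w"], of "-K"] ge_mono[OF ge_abs[of "snd w"], of "-K"]
    unfolding K_def by simp_all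
  have K0: "0 \<le> K" "0 \<le> D" by (simp_all add: K_def D_def)
  have A: "\<And>z. ge (K + D) (fst z) \<Longrightarrow> ge (K + D) (snd z) \<Longrightarrow> z \<in> lat u w"
  proof -
    fix z assume z: "ge (K + D) (fst z)" "ge (K + D) (snd z)"
    have "ge (K + D + -K) (fst z * snd w)" "ge (K + D + -K) (snd z * fst w)"
      "ge (-K + (K + D)) (fst u * snd z)" "ge (-K + (K + D)) (snd u * fst z)"
      using ge_mult[OF z(1) Kc(4)] ge_mult[OF z(2) Kc(3)] ge_mult[OF Kc(1) z(2)] ge_mult[OF Kc(2) z(1)] by simp_all
    then have "ge D (fst z * snd w - snd z * fst w)" "ge D (fst u * snd z - snd u * fst z)"
      by (simp_all add: ge_diff)
    then have "ge (D - v (dt u w)) ((fst z * snd w - snd z * fst w) / dt u w)"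
        "ge (D - v (dt u w)) ((fst u * snd z - snd u * fst z) / dt u w)"
      using assms by (simp_all add: ge_div)
    moreover have "0 \<le> D - v (dt u w)" by (simp add: D_def)
    ultimately show "z \<in> lat u w" using lat_mem_iff[OF assms] ge_mono by blast
  qed
  show ?thesis
  proof (intro exI allI impI)
    fix e T assume e: "2 * K + D \<le> e" and n: "near e T"
    obtain t1 t2 t3 t4 where t: "ge e t1" "ge e t2" "ge e t3" "ge e t4" "T = (1 + t1, t2, t3, 1 + t4)"
      using n near_def by auto
    have B: "mat_apply T x \<in> lat u w" if x: "x \<in> lat u w" "ge (-K) (fst x)" "ge (-K) (snd x)" for x
    proof -
      have "ge (e + -K) (t1 * fst x)" "ge (e + -K) (t2 * snd x)" "ge (e + -K) (t3 * fst x)" "ge (e + -K) (t4 * snd x)"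
        using ge_mult[OF t(1) x(2)] ge_mult[OF t(2) x(3)] ge_mult[OF t(3) x(2)] ge_mult[OF t(4) x(3)] by simp_all
      then have "ge (e - K) (t1 * fst x + t2 * snd x)" "ge (e - K) (t3 * fst x + t4 * snd x)"
        by (simp_all add: ge_add)
      moreover have "K + D \<le> e - K" using e by simp
      ultimately have "ge (K + D) (t1 * fst x + t2 * snd x)" "ge (K + D) (t3 * fst x + t4 * snd x)"
        using ge_mono by blast+
      then have z: "(t1 * fst x + t2 * snd x, t3 * fst x + t4 * snd x) \<in> lat u w"
        using A by simp
      have "mat_apply T x = (fst x + fst (t1 * fst x + t2 * snd x, t3 * fst x + t4 * snd x),
                             snd x + snd (t1 * fst x + t2 * snd x, t3 * fst x + t4 * snd x))"
        using t(5) by (cases x) (simp add: algebra_simps)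
      then show ?thesis using lat_add[OF x(1) z] by simp
    qed
    show "mat_apply T ` lat u w \<subseteq> lat u w"
      unfolding mat_lat by (rule lat_sub) (use B lat_u lat_w Kc in auto)
  qed
qed

lemma near_eq: assumes "dt u w \<noteq> 0"
  shows "\<exists>m::nat. \<forall>e::nat\<ge>m. \<forall>T. near (int e) T \<longrightarrow> mat_apply T ` lat u w = lat u w"
proof -
  obtain m where m: "\<forall>e\<ge>m. \<forall>T. near e T \<longrightarrow> mat_apply T ` lat u w \<subseteq> lat u w" using near_sub[OF assms] by blast
  show ?thesis
  proof (intro exI allI impI)
    fix e :: nat and T assume e: "nat (max m 1) \<le> e" and n: "near (int e) T"
    have e1: "1 \<le> int e" "m \<le> int e" using e by auto
    have s1: "mat_apply T ` lat u w \<subseteq> lat u w" using m e1 n by blast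
    have s2: "mat_apply (minv T) ` lat u w \<subseteq> lat u w" using m e1 near_minv[OF n e1(1)] by blast
    have dT: "mat_det T \<noteq> 0" using near_det[OF n e1(1)] by simp
    have "lat u w \<subseteq> mat_apply T ` lat u w"
    proof
      fix x assume "x \<in> lat u w"
      then have "mat_apply (minv T) x \<in> lat u w" using s2 by blast
      moreover have "x = mat_apply T (mat_apply (minv T) x)" using minv_apply2[OF dT] by simp
      ultimately show "x \<in> mat_apply T ` lat u w" by blast
    qed
    then show "mat_apply T ` lat u w = lat u w" using s1 by blast
  qed
qed

end

lemma mat_ext: "(\<And>x. mat_apply A x = mat_apply B x) \<Longrightarrow> A = B"
proof -
  assume h: "\<And>x. mat_apply A x = mat_apply B x"
  obtain a b c d a' b' c' d' where e: "A = (a,b,c,d)" "B = (a',b',c',d')" by (cases A; cases B)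
  have "mat_apply A (1,0) = mat_apply B (1,0)" "mat_apply A (0,1) = mat_apply B (0,1)" using h by simp_all
  then show "A = B" using e by simp
qed

lemma mmul_minv_cancel: "mat_det A \<noteq> 0 \<Longrightarrow> mmul A (mmul (minv A) B) = B"
  by (rule mat_ext) (simp add: mmul_apply minv_apply2)

lemma minv_mmul_self: "mat_det A \<noteq> 0 \<Longrightarrow> mmul (minv A) A = (1, 0, 0, 1)"
  apply (rule mat_ext)
  subgoal for x by (cases x) (simp add: mmul_apply minv_apply1)
  done

context nlf begin

lemma gl_act_smat: assumes "s \<noteq> 0" "y \<in> vertices v" shows "gl_act (smat s M) y = gl_act M y"
proof -
  obtain u w where y: "y = hclass (lat u w)" using assms(2) vertices_lat by blast
  have "mat_apply (smat s M) ` lat u w = scal2 s ` (mat_apply M ` lat u w)"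
    by (simp add: smat_apply image_image)
  then show ?thesis using assms(1) by (simp add: y gl_act_hclass hclass_scal)
qed

lemma cauchy_step:
  assumes g: "ge 0 g2" "ge 0 g3" "ge 0 g4" and e: "1 \<le> e" and mu: "\<mu> \<noteq> 0"
    and ep: "ge e e1" "ge e e2" "ge e e3" "ge e e4"
    and eq: "mmul (1, g2, g3, g4) (\<mu> * (1 + e1), \<mu> * e2, \<mu> * e3, \<mu> * (1 + e4)) = (1, h2, h3, h4)"
  shows "ge e (h2 - g2) \<and> ge e (h3 - g3) \<and> ge e (h4 - g4)"
proof -
  have E: "\<mu> * (1 + e1) + g2 * (\<mu> * e3) = 1" "\<mu> * e2 + g2 * (\<mu> * (1 + e4)) = h2"
    "g3 * (\<mu> * (1 + e1)) + g4 * (\<mu> * e3) = h3" "g3 * (\<mu> * e2) + g4 * (\<mu> * (1 + e4)) = h4"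
    using eq by (simp_all add: mmul_def)
  define \<eta> where "\<eta> = e1 + g2 * e3"
  have ge\<eta>: "ge e \<eta>" unfolding \<eta>_def using ep g by (intro ge_add ge_multk') auto
  have m1: "\<mu> * (1 + \<eta>) = 1" using E(1) by (simp add: \<eta>_def algebra_simps)
  have "ge 1 ((1 + \<eta>) - 1)" using ge\<eta> e ge_mono by simp
  then have u: "1 + \<eta> \<noteq> 0" "v (1 + \<eta>) = 0" using unit_close[of 1 "1 + \<eta>"] v1 by auto
  have mudef: "\<mu> = inverse (1 + \<eta>)" using m1 u(1) by (simp add: field_simps)
  have gmu: "ge 0 \<mu>" using u by (simp add: mudef ge_unit_inv)
  have "\<mu> - 1 = - (\<eta> * \<mu>)" using m1 by (simp add: algebra_simps)
  then have gm1: "ge e (\<mu> - 1)" using ge\<eta> gmu by (simp add: ge_multk)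
  have me: "ge e (\<mu> * e1)" "ge e (\<mu> * e2)" "ge e (\<mu> * e3)" "ge e (\<mu> * e4)"
    using gmu ep by (simp_all add: ge_multk')
  have "h2 - g2 = \<mu> * e2 + g2 * (\<mu> - 1) + g2 * (\<mu> * e4)" using E(2) by (simp add: algebra_simps)
  moreover have "ge e (\<mu> * e2 + g2 * (\<mu> - 1) + g2 * (\<mu> * e4))"
    using ge_add[OF ge_add[OF me(2) ge_multk'[OF g(1) gm1]] ge_multk'[OF g(1) me(4)]] .
  moreover have "h3 - g3 = g3 * (\<mu> - 1) + g3 * (\<mu> * e1) + g4 * (\<mu> * e3)" using E(3) by (simp add: algebra_simps)
  moreover have "ge e (g3 * (\<mu> - 1) + g3 * (\<mu> * e1) + g4 * (\<mu> * e3))"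
    using ge_add[OF ge_add[OF ge_multk'[OF g(2) gm1] ge_multk'[OF g(2) me(1)]] ge_multk'[OF g(3) me(3)]] .
  moreover have "h4 - g4 = g3 * (\<mu> * e2) + g4 * (\<mu> - 1) + g4 * (\<mu> * e4)" using E(4) by (simp add: algebra_simps)
  moreover have "ge e (g3 * (\<mu> * e2) + g4 * (\<mu> - 1) + g4 * (\<mu> * e4))"
    using ge_add[OF ge_add[OF ge_multk'[OF g(2) me(2)] ge_multk'[OF g(3) gm1]] ge_multk'[OF g(3) me(4)]] .
  ultimately show ?thesis by simp
qed

lemma limit_ex:
  fixes s :: "nat \<Rightarrow> 'a"
  assumes c: "\<And>e e'. 1 \<le> e \<Longrightarrow> e \<le> e' \<Longrightarrow> ge (int e) (s e' - s e)"
  shows "\<exists>l. \<forall>e\<ge>1. ge (int e) (l - s e)"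
proof -
  have "\<forall>N::int. \<exists>M. \<forall>m\<ge>M. \<forall>n\<ge>M. s m - s n \<in> {x. x = 0 \<or> N \<le> v x}"
  proof
    fix N :: int
    show "\<exists>M. \<forall>m\<ge>M. \<forall>n\<ge>M. s m - s n \<in> {x. x = 0 \<or> N \<le> v x}"
    proof (intro exI allI impI)
      fix m n assume mn: "nat N + 1 \<le> m" "nat N + 1 \<le> n"
      have "ge N (s m - s n)"
      proof (cases "n \<le> m")
        case True
        then have "ge (int n) (s m - s n)" using c mn by simp
        then show ?thesis using mn ge_mono by fastforce
      next
        case False
        then have "ge (int m) (s n - s m)" using c mn by simp
        then have "ge (int m) (s m - s n)" using ge_neg[of "int m" "s n - s m"] by simp
        then show ?thesis using mn ge_mono by fastforce
      qed
      then show "s m - s n \<in> {x. x = 0 \<or> N \<le> v x}" by (simp add: ge_def)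
    qed
  qed
  then obtain l where l: "\<forall>N::int. \<exists>M. \<forall>n\<ge>M. s n - l \<in> {x. x = 0 \<or> N \<le> v x}"
    using complete by blast
  show ?thesis
  proof (intro exI allI impI)
    fix e :: nat assume e: "1 \<le> e"
    obtain M where M: "\<forall>n\<ge>M. s n - l \<in> {x. x = 0 \<or> int e \<le> v x}" using l by blast
    define n where "n = max M e"
    have a: "ge (int e) (s n - l)" using M by (simp add: n_def ge_def)
    have b: "ge (int e) (s n - s e)" using c e by (simp add: n_def)
    have "l - s e = (s n - s e) - (s n - l)" by simp
    then show "ge (int e) (l - s e)" using ge_diff[OF b a] by simp
  qed
qed

lemma near_close: assumes "near 1 A" "ge e d1" "ge e d2" "ge e d3" "ge e d4"
  and "A = (a1,a2,a3,a4)" "B = (a1 + d1, a2 + d2, a3 + d3, a4 + d4)"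
  shows "near e (mmul (minv A) B)"
proof -
  have dA: "mat_det A \<noteq> 0" using near_det[OF assms(1)] by simp
  obtain m1 m2 m3 m4 where mi: "minv A = (m1, m2, m3, m4)" by (cases "minv A")
  have "near 1 (minv A)" using near_minv[OF assms(1)] by simp
  then obtain t1 t2 t3 t4 where t: "ge 1 t1" "ge 1 t2" "ge 1 t3" "ge 1 t4" "minv A = (1 + t1, t2, t3, 1 + t4)"
    unfolding near_def by blast
  have "ge 0 t1" "ge 0 t2" "ge 0 t3" "ge 0 t4" using t ge_mono[of 1 _ 0] by auto
  then have gm: "ge 0 m1" "ge 0 m2" "ge 0 m3" "ge 0 m4" using mi t(5) by (auto intro: ge_add)
  have I: "mmul (minv A) A = (1,0,0,1)" using minv_mmul_self[OF dA] .
  then have Ie: "m1 * a1 + m2 * a3 = 1" "m1 * a2 + m2 * a4 = 0" "m3 * a1 + m4 * a3 = 0" "m3 * a2 + m4 * a4 = 1"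
    using mi assms(6) by (simp_all add: mmul_def)
  have "mmul (minv A) B = (1 + (m1 * d1 + m2 * d3), m1 * d2 + m2 * d4, m3 * d1 + m4 * d3, 1 + (m3 * d2 + m4 * d4))"
    using mi assms(7) Ie by (simp add: mmul_def algebra_simps)
  moreover have "ge e (m1 * d1 + m2 * d3)" "ge e (m1 * d2 + m2 * d4)" "ge e (m3 * d1 + m4 * d3)" "ge e (m3 * d2 + m4 * d4)"
    using gm assms(2-5) by (auto intro!: ge_add ge_multk')
  ultimately show ?thesis unfolding near_def by blast
qed

end

context nlf begin

lemma normalize:
  assumes mu: "\<mu> \<noteq> 0" and ep: "ge 1 e1" "ge 1 e2" "ge 1 e3" "ge 1 e4"
    and B: "B = (\<mu> * (1 + e1), \<mu> * e2, \<mu> * e3, \<mu> * (1 + e4))"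
  shows "fst B \<noteq> 0 \<and> near 1 (smat (inverse (fst B)) B) \<and> fst (smat (inverse (fst B)) B) = 1"
proof -
  have "ge 1 ((1 + e1) - 1)" using ep by simp
  then have u: "1 + e1 \<noteq> 0" "v (1 + e1) = 0" using unit_close[of 1 "1 + e1"] v1 by auto
  define i where "i = inverse (1 + e1)"
  have gi: "ge 0 i" using u by (simp add: i_def ge_unit_inv)
  have "fst B = \<mu> * (1 + e1)" using B by simp
  then have fB: "fst B \<noteq> 0" using mu u by (metis mult_eq_0_iff)
  have "smat (inverse (fst B)) B = (1 + 0, e2 * i, e3 * i, 1 + (e4 - e1) * i)"
  proof -
    have a: "\<mu> + \<mu> * e1 \<noteq> 0" using fB B by (simp add: algebra_simps)
    show ?thesis using B mu u a by (simp add: smat_def i_def field_simps)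
  qed
  moreover have "ge 1 (e2 * i)" "ge 1 (e3 * i)" "ge 1 ((e4 - e1) * i)"
    using gi ep by (simp_all add: ge_multk ge_diff)
  ultimately show ?thesis using fB unfolding near_def by force
qed

lemma tdist_refl: "tdist v x x = 0"
  using tdist_le[of "\<lambda>i. x" x 0 x] by simp

lemma T_vertices: "hclass (T1 k) \<in> vertices v" "hclass (T2 k) \<in> vertices v" "hclass (T3 k) \<in> vertices v"
  unfolding T1_def T2_def T3_def using p0 by (auto intro!: hclass_lat_vertex simp: dt_def scal2_def)

lemma fixer_ball:
  assumes d: "mat_det N \<noteq> 0" and k: "1 \<le> k"
    and f: "\<And>y. y \<in> vertices v \<Longrightarrow> tdist v y x1 \<le> k \<Longrightarrow> gl_act N y = y"
  shows "\<exists>\<mu> e1 e2 e3 e4. \<mu> \<noteq> 0 \<and> ge (int k) e1 \<and> ge (int k) e2 \<and> ge (int k) e3 \<and> ge (int k) e4 \<and>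
           N = (\<mu> * (1 + e1), \<mu> * e2, \<mu> * e3, \<mu> * (1 + e4))"
  by (rule fixer[OF d k]) (use f x1_vertex tdist_refl T_vertices tdist_T in auto)

definition c2 :: "'a mat2 \<Rightarrow> 'a" where "c2 M = fst (snd M)"
definition c3 :: "'a mat2 \<Rightarrow> 'a" where "c3 M = fst (snd (snd M))"
definition c4 :: "'a mat2 \<Rightarrow> 'a" where "c4 M = snd (snd (snd M))"

lemma near1_form: assumes "near 1 G" "fst G = 1"
  shows "G = (1, c2 G, c3 G, c4 G) \<and> ge 0 (c2 G) \<and> ge 0 (c3 G) \<and> ge 0 (c4 G)"
proof -
  obtain t1 t2 t3 t4 where t: "ge 1 t1" "ge 1 t2" "ge 1 t3" "ge 1 t4" "G = (1 + t1, t2, t3, 1 + t4)"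
    using assms(1) near_def by auto
  have "ge 0 t2" "ge 0 t3" "ge 0 t4" using t ge_mono[of 1 _ 0] by auto
  then show ?thesis using t(5) assms(2) by (auto simp: c2_def c3_def c4_def intro: ge_add)
qed

lemma hard: assumes G: "\<forall>e\<ge>1. g \<in> Ghat v e" shows "g \<in> PGL_in_Aut v"
proof -
  have aut: "g \<in> tree_aut v" using G unfolding Ghat_def by auto
  define x2 where "x2 = hclass (T1 1)"
  have ax: "adj v x1 x2" using adj_x1 x2_def by simp
  have "\<forall>e. \<exists>A. 1 \<le> e \<longrightarrow> mat_det A \<noteq> 0 \<and> (\<forall>y\<in>vertices v. tdist v y x1 \<le> e \<longrightarrow> g y = gl_act A y)"
  proof
    fix e :: nat
    show "\<exists>A. 1 \<le> e \<longrightarrow> mat_det A \<noteq> 0 \<and> (\<forall>y\<in>vertices v. tdist v y x1 \<le> e \<longrightarrow> g y = gl_act A y)"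
    proof (cases "1 \<le> e")
      case True
      then have "g \<in> Ghat v e" using G by simp
      then obtain g' where g': "g' \<in> PGL_in_Aut v"
        "\<forall>y\<in>vertices v. min (tdist v y x1) (tdist v y x2) \<le> e \<longrightarrow> g y = g' y"
        using ax unfolding Ghat_def by blast
      obtain A where A: "mat_det A \<noteq> 0" "g' = pgl_aut v A" using g'(1) unfolding PGL_in_Aut_def by blast
      have "\<forall>y\<in>vertices v. tdist v y x1 \<le> e \<longrightarrow> g y = gl_act A y"
        using g'(2) A(2) by (auto simp: pgl_aut_def)
      then show ?thesis using A(1) by blast
    qed simp
  qed
  then obtain Af where Af: "\<And>e. 1 \<le> e \<Longrightarrow> mat_det (Af e) \<noteq> 0"
    "\<And>e y. 1 \<le> e \<Longrightarrow> y \<in> vertices v \<Longrightarrow> tdist v y x1 \<le> e \<Longrightarrow> g y = gl_act (Af e) y"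
    by metis
  define A1 where "A1 = Af 1"
  have dA1: "mat_det A1 \<noteq> 0" using Af(1) A1_def by simp
  have dA1i: "mat_det (minv A1) \<noteq> 0" using minv_det[OF dA1] .
  have inv1: "\<And>X. gl_act (minv A1) (gl_act A1 X) = X" using gl_act_inv minv_apply1[OF dA1] by blast
  have inv2: "\<And>X. gl_act A1 (gl_act (minv A1) X) = X" using gl_act_inv minv_apply2[OF dA1] by blast
  define B where "B e = mmul (minv A1) (Af e)" for e
  have dB: "\<And>e. 1 \<le> e \<Longrightarrow> mat_det (B e) \<noteq> 0" using Af(1) dA1i by (simp add: B_def mmul_det)
  have gB: "\<And>e y. 1 \<le> e \<Longrightarrow> y \<in> vertices v \<Longrightarrow> tdist v y x1 \<le> e \<Longrightarrow> gl_act (B e) y = gl_act (minv A1) (g y)"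
    using Af(2) by (simp add: B_def gl_act_mmul)
  have fixB: "\<And>e y. 1 \<le> e \<Longrightarrow> y \<in> vertices v \<Longrightarrow> tdist v y x1 \<le> 1 \<Longrightarrow> gl_act (B e) y = y"
  proof -
    fix e :: nat and y assume a: "1 \<le> e" "y \<in> vertices v" "tdist v y x1 \<le> (1::nat)"
    have "g y = gl_act A1 y" using Af(2)[of 1 y] a by (simp add: A1_def)
    then show "gl_act (B e) y = y" using gB[of e y] a inv1 by simp
  qed
  define G where "G e = smat (inverse (fst (B e))) (B e)" for e
  have Gp: "\<And>e. 1 \<le> e \<Longrightarrow> fst (B e) \<noteq> 0 \<and> near 1 (G e) \<and> fst (G e) = 1"
  proof -
    fix e :: nat assume e: "1 \<le> e"
    obtain \<mu> e1 e2 e3 e4 where m: "\<mu> \<noteq> 0" "ge 1 e1" "ge 1 e2" "ge 1 e3" "ge 1 e4"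
      "B e = (\<mu> * (1 + e1), \<mu> * e2, \<mu> * e3, \<mu> * (1 + e4))"
      using fixer_ball[OF dB[OF e] order_refl, of ] fixB[OF e] by auto
    show "fst (B e) \<noteq> 0 \<and> near 1 (G e) \<and> fst (G e) = 1"
      using normalize[OF m] by (simp add: G_def)
  qed
  have dG: "\<And>e. 1 \<le> e \<Longrightarrow> mat_det (G e) \<noteq> 0" using Gp near_det by blast
  have gG: "\<And>e y. 1 \<le> e \<Longrightarrow> y \<in> vertices v \<Longrightarrow> tdist v y x1 \<le> e \<Longrightarrow> gl_act A1 (gl_act (G e) y) = g y"
  proof -
    fix e y assume a: "1 \<le> e" "y \<in> vertices v" "tdist v y x1 \<le> e"
    have "gl_act (G e) y = gl_act (B e) y" using Gp[OF a(1)] a(2) by (simp add: G_def gl_act_smat)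
    then show "gl_act A1 (gl_act (G e) y) = g y" using gB[OF a] inv2 by simp
  qed
  have GF: "\<And>e. 1 \<le> e \<Longrightarrow> G e = (1, c2 (G e), c3 (G e), c4 (G e)) \<and> ge 0 (c2 (G e)) \<and> ge 0 (c3 (G e)) \<and> ge 0 (c4 (G e))"
    using Gp near1_form by blast
  have cauchy: "\<And>e e'. 1 \<le> e \<Longrightarrow> e \<le> e' \<Longrightarrow>
      ge (int e) (c2 (G e') - c2 (G e)) \<and> ge (int e) (c3 (G e') - c3 (G e)) \<and> ge (int e) (c4 (G e') - c4 (G e))"
  proof -
    fix e e' :: nat assume e: "1 \<le> e" "e \<le> e'"
    have e': "1 \<le> e'" using e by simp
    define N where "N = mmul (minv (G e)) (G e')"
    have dN: "mat_det N \<noteq> 0" using dG[OF e(1)] dG[OF e'] minv_det by (simp add: N_def mmul_det)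
    have fN: "\<And>y. y \<in> vertices v \<Longrightarrow> tdist v y x1 \<le> e \<Longrightarrow> gl_act N y = y"
    proof -
      fix y assume y: "y \<in> vertices v" "tdist v y x1 \<le> e"
      have "gl_act A1 (gl_act (G e) y) = gl_act A1 (gl_act (G e') y)"
        using gG[OF e(1) y] gG[OF e' y(1)] y(2) e(2) by simp
      then have "gl_act (G e) y = gl_act (G e') y" using inv1 by metis
      then have "gl_act N y = gl_act (minv (G e)) (gl_act (G e) y)" by (simp add: N_def gl_act_mmul)
      also have "\<dots> = y" using gl_act_inv minv_apply1[OF dG[OF e(1)]] by blast
      finally show "gl_act N y = y" .
    qed
    obtain \<mu> e1 e2 e3 e4 where m: "\<mu> \<noteq> 0" "ge (int e) e1" "ge (int e) e2" "ge (int e) e3" "ge (int e) e4"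
      "N = (\<mu> * (1 + e1), \<mu> * e2, \<mu> * e3, \<mu> * (1 + e4))"
      using fixer_ball[OF dN e(1) fN] by blast
    have "mmul (G e) N = G e'" unfolding N_def by (rule mmul_minv_cancel[OF dG[OF e(1)]])
    then have E: "mmul (1, c2 (G e), c3 (G e), c4 (G e)) (\<mu> * (1 + e1), \<mu> * e2, \<mu> * e3, \<mu> * (1 + e4))
        = (1, c2 (G e'), c3 (G e'), c4 (G e'))" using GF[OF e(1)] GF[OF e'] m(6) by simp
    have g: "ge 0 (c2 (G e))" "ge 0 (c3 (G e))" "ge 0 (c4 (G e))" using GF[OF e(1)] by simp_all
    have ie: "1 \<le> int e" using e(1) by simp
    show "ge (int e) (c2 (G e') - c2 (G e)) \<and> ge (int e) (c3 (G e') - c3 (G e)) \<and> ge (int e) (c4 (G e') - c4 (G e))"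
      using cauchy_step[OF g ie m(1) m(2) m(3) m(4) m(5) E] .
  qed
  obtain l2 where l2: "\<forall>e\<ge>1. ge (int e) (l2 - c2 (G e))" using limit_ex[of "\<lambda>e. c2 (G e)"] cauchy by blast
  obtain l3 where l3: "\<forall>e\<ge>1. ge (int e) (l3 - c3 (G e))" using limit_ex[of "\<lambda>e. c3 (G e)"] cauchy by blast
  obtain l4 where l4: "\<forall>e\<ge>1. ge (int e) (l4 - c4 (G e))" using limit_ex[of "\<lambda>e. c4 (G e)"] cauchy by blast
  define Gi where "Gi = ((1::'a), l2, l3, l4)"
  have nT: "\<And>e. 1 \<le> e \<Longrightarrow> near (int e) (mmul (minv (G e)) Gi)"
  proof -
    fix e :: nat assume e: "1 \<le> e"
    have Gi: "Gi = (1 + 0, c2 (G e) + (l2 - c2 (G e)), c3 (G e) + (l3 - c3 (G e)), c4 (G e) + (l4 - c4 (G e)))"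
      by (simp add: Gi_def)
    have Ge: "G e = (1, c2 (G e), c3 (G e), c4 (G e))" using GF[OF e] by blast
    have n1: "near 1 (G e)" using Gp[OF e] by blast
    have d: "ge (int e) 0" "ge (int e) (l2 - c2 (G e))" "ge (int e) (l3 - c3 (G e))" "ge (int e) (l4 - c4 (G e))"
      using l2 l3 l4 e by auto
    show "near (int e) (mmul (minv (G e)) Gi)"
      using near_close[OF n1 d Ge Gi] .
  qed
  have dGi: "mat_det Gi \<noteq> 0"
  proof -
    have "mat_det (mmul (minv (G 1)) Gi) \<noteq> 0" using near_det[OF nT[of 1]] by simp
    then show ?thesis by (simp add: mmul_det)
  qed
  define M where "M = mmul A1 Gi"
  have dM: "mat_det M \<noteq> 0" using dA1 dGi by (simp add: M_def mmul_det)
  have agree: "\<And>y. y \<in> vertices v \<Longrightarrow> g y = gl_act M y"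
  proof -
    fix y assume y: "y \<in> vertices v"
    obtain u w where uw: "dt u w \<noteq> 0" "y = hclass (lat u w)" using y vertices_lat by blast
    obtain m where m: "\<forall>e::nat\<ge>m. \<forall>T. near (int e) T \<longrightarrow> mat_apply T ` lat u w = lat u w"
      using near_eq[OF uw(1)] by blast
    define e where "e = max (max (tdist v y x1) m) 1"
    have e: "1 \<le> e" "m \<le> e" "tdist v y x1 \<le> e" by (auto simp: e_def)
    define T where "T = mmul (minv (G e)) Gi"
    have "mat_apply T ` lat u w = lat u w" using m e nT[OF e(1)] T_def by blast
    then have fT: "gl_act T y = y" using uw(2) by (simp add: gl_act_hclass)
    have "Gi = mmul (G e) T" unfolding T_def by (rule mmul_minv_cancel[OF dG[OF e(1)], symmetric])
    then have "gl_act Gi y = gl_act (G e) y" using fT by (simp add: gl_act_mmul)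
    then show "g y = gl_act M y" using gG[OF e(1) y e(3)] by (simp add: M_def gl_act_mmul)
  qed
  have "g = pgl_aut v M"
  proof
    fix x show "g x = pgl_aut v M x"
      using agree aut by (auto simp: pgl_aut_def tree_aut_def)
  qed
  then show ?thesis unfolding PGL_in_Aut_def using dM by blast
qed

end

theorem mainTheorem4:
  fixes v :: "'a::field \<Rightarrow> int"
  assumes "nonarch_local_field v"
  shows "(\<Inter>e\<in>{e::nat. 1 \<le> e}. Ghat v e) = PGL_in_Aut v \<and>
         (\<forall>e::nat. 1 \<le> e \<longrightarrow>
            PGL_in_Aut v \<subseteq> Ghat v (e + 1) \<and> Ghat v (e + 1) \<subseteq> Ghat v e \<and> Ghat v e \<subseteq> tree_aut v)"
proof -
  note A = assms[unfolded nonarch_local_field_def]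
  note A1 = A[THEN conjunct1] and A2 = A[THEN conjunct2, THEN conjunct1]
    and A3 = A[THEN conjunct2, THEN conjunct2, THEN conjunct1]
    and A5 = A[THEN conjunct2, THEN conjunct2, THEN conjunct2, THEN conjunct2]
  obtain p where p: "p \<noteq> 0" "v p = 1" using A3 by blast
  interpret nlf v p
  proof
    show "\<And>x y. x \<noteq> 0 \<Longrightarrow> y \<noteq> 0 \<Longrightarrow> v (x * y) = v x + v y" by (rule A1[rule_format])
    show "\<And>x y. x \<noteq> 0 \<Longrightarrow> y \<noteq> 0 \<Longrightarrow> x + y \<noteq> 0 \<Longrightarrow> min (v x) (v y) \<le> v (x + y)"
      by (rule A2[rule_format])
    show "p \<noteq> 0" "v p = 1" using p by simp_all
    show "\<And>s::nat \<Rightarrow> 'a.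
        (\<forall>N::int. \<exists>M. \<forall>m\<ge>M. \<forall>n\<ge>M. s m - s n \<in> {x. x = 0 \<or> N \<le> v x})
        \<Longrightarrow> (\<exists>l. \<forall>N::int. \<exists>M. \<forall>n\<ge>M. s n - l \<in> {x. x = 0 \<or> N \<le> v x})"
      by (rule mp[OF spec[OF A5]])
  qed
  have sub_aut: "\<And>e. Ghat v e \<subseteq> tree_aut v" unfolding Ghat_def by blast
  have mono: "\<And>e. Ghat v (e + 1) \<subseteq> Ghat v e"
  proof
    fix e g assume g: "g \<in> Ghat v (e + 1)"
    show "g \<in> Ghat v e" unfolding Ghat_def
    proof (intro CollectI conjI allI impI)
      show "g \<in> tree_aut v" using g unfolding Ghat_def by blast
      fix a b assume "adj v a b"
      then obtain g' where "g' \<in> PGL_in_Aut v" "\<forall>y\<in>vertices v. min (tdist v y a) (tdist v y b) \<le> e + 1 \<longrightarrow> g y = g' y"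
        using g unfolding Ghat_def by blast
      then show "\<exists>g'\<in>PGL_in_Aut v. \<forall>y\<in>vertices v. min (tdist v y a) (tdist v y b) \<le> e \<longrightarrow> g y = g' y"
        by (metis le_SucI Suc_eq_plus1)
    qed
  qed
  have pgl: "\<And>e. PGL_in_Aut v \<subseteq> Ghat v e"
  proof
    fix e g assume g: "g \<in> PGL_in_Aut v"
    then have "g \<in> tree_aut v" using PGL_sub_aut by blast
    then show "g \<in> Ghat v e" unfolding Ghat_def using g by blast
  qed
  have "(\<Inter>e\<in>{e::nat. 1 \<le> e}. Ghat v e) = PGL_in_Aut v"
  proof
    show "(\<Inter>e\<in>{e::nat. 1 \<le> e}. Ghat v e) \<subseteq> PGL_in_Aut v"
    proof
      fix g assume "g \<in> (\<Inter>e\<in>{e::nat. 1 \<le> e}. Ghat v e)"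
      then have "\<forall>e\<ge>1. g \<in> Ghat v e" by simp
      then show "g \<in> PGL_in_Aut v" by (rule hard)
    qed
    show "PGL_in_Aut v \<subseteq> (\<Inter>e\<in>{e::nat. 1 \<le> e}. Ghat v e)" using pgl by (simp add: subset_iff)
  qed
  then show ?thesis using sub_aut mono pgl by simp
qed

end
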